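(* There is no circulant weighing matrix $CW(143,36)$.
   Context: A circulant weighing matrix $CW(n,k)$ is an $n\times n$ circulant matrix $W$ (each row after the first is the right cyclic shift of the previous row) with all entries in $\{0,1,-1\}$ such that $WW^T=kI_n$. *)

theory Defs
  imports Main
begin

definition is_circulant :: "nat \<Rightarrow> (nat \<Rightarrow> nat \<Rightarrow> int) \<Rightarrow> bool" where
  "is_circulant n W \<longleftrightarrow>
     (\<forall>i < n. \<forall>j < n. W i j = W 0 ((j + n - i) mod n))"

definition is_CW :: "nat \<Rightarrow> nat \<Rightarrow> (nat \<Rightarrow> nat \<Rightarrow> int) \<Rightarrow> bool" where
  "is_CW n k W \<longleftrightarrow>
     is_circulant n W \<and>
     (\<forall>i < n. \<forall>j < n. W i j \<in> {0, 1, -1}) \<and>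
     (\<forall>i < n. \<forall>j < n. (\<Sum>l<n. W i l * W j l) = (if i = j then int k else 0))"

end

theory Submission
  imports Defs "HOL-Computational_Algebra.Polynomial"
begin

definition cg :: "nat \<Rightarrow> int \<Rightarrow> int poly \<Rightarrow> int poly \<Rightarrow> bool" where
  "cg n m P Q \<longleftrightarrow> (\<exists>R S. P - Q = smult m R + (monom 1 n - 1) * S)"

lemma cg_refl[simp]: "cg n m P P"
  unfolding cg_def by (rule exI[of _ 0], rule exI[of _ 0]) simp

lemma cg_sym: "cg n m P Q \<Longrightarrow> cg n m Q P"
  unfolding cg_def by (metis (no_types, opaque_lifting) add.inverse_inverse minus_add_distrib minus_diff_eq mult_minus_right smult_minus_right)

lemma cg_trans: "cg n m P Q \<Longrightarrow> cg n m Q Z \<Longrightarrow> cg n m P Z"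
proof -
  assume "cg n m P Q" "cg n m Q Z"
  then obtain R S R' S' where "P - Q = smult m R + (monom 1 n - 1) * S" "Q - Z = smult m R' + (monom 1 n - 1) * S'"
    unfolding cg_def by blast
  then have "P - Z = smult m (R + R') + (monom 1 n - 1) * (S + S')"
    by (simp add: algebra_simps smult_add_right)
  then show ?thesis unfolding cg_def by blast
qed

lemma cg_add: "cg n m P Q \<Longrightarrow> cg n m P' Q' \<Longrightarrow> cg n m (P + P') (Q + Q')"
proof -
  assume "cg n m P Q" "cg n m P' Q'"
  then obtain R S R' S' where "P - Q = smult m R + (monom 1 n - 1) * S" "P' - Q' = smult m R' + (monom 1 n - 1) * S'"
    unfolding cg_def by blast
  then have "(P + P') - (Q + Q') = smult m (R + R') + (monom 1 n - 1) * (S + S')"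
    by (simp add: algebra_simps smult_add_right)
  then show ?thesis unfolding cg_def by blast
qed

lemma cg_multR: "cg n m P Q \<Longrightarrow> cg n m (P * Z) (Q * Z)"
proof -
  assume "cg n m P Q"
  then obtain R S where "P - Q = smult m R + (monom 1 n - 1) * S"
    unfolding cg_def by blast
  then have "P * Z - Q * Z = smult m (R * Z) + (monom 1 n - 1) * (S * Z)"
    by (metis (no_types, lifting) distrib_right left_diff_distrib mult.assoc mult_smult_left)
  then show ?thesis unfolding cg_def by blast
qed

lemma cg_mult: "cg n m P Q \<Longrightarrow> cg n m P' Q' \<Longrightarrow> cg n m (P * P') (Q * Q')"
  by (metis cg_multR cg_trans mult.commute)

lemma cg_uminus: "cg n m P Q \<Longrightarrow> cg n m (-P) (-Q)"
  using cg_multR[of n m P Q "-1"] by simp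

lemma cg_diff: "cg n m P Q \<Longrightarrow> cg n m P' Q' \<Longrightarrow> cg n m (P - P') (Q - Q')"
  using cg_add cg_uminus by (metis diff_conv_add_uminus)

lemma cg_power: "cg n m P Q \<Longrightarrow> cg n m (P ^ k) (Q ^ k)"
  by (induction k) (auto intro: cg_mult)

lemma cg_smult: "cg n m P Q \<Longrightarrow> cg n m (smult c P) (smult c Q)"
  using cg_multR[of n m P Q "[:c:]"] by (simp add: mult.commute)

lemma cg_sum: "(\<And>i. i \<in> A \<Longrightarrow> cg n m (f i) (g i)) \<Longrightarrow> cg n m (sum f A) (sum g A)"
  by (induction A rule: infinite_finite_induct) (auto intro: cg_add)

lemma cg_dvd: "d dvd m \<Longrightarrow> cg n m P Q \<Longrightarrow> cg n d P Q"
proof -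
  assume "d dvd m" "cg n m P Q"
  then obtain R S k where "P - Q = smult m R + (monom 1 n - 1) * S" "m = d * k"
    unfolding cg_def by (blast elim: dvdE)
  then have "P - Q = smult d (smult k R) + (monom 1 n - 1) * S" by simp
  then show ?thesis unfolding cg_def by blast
qed

lemma cg_0_any: "cg n 0 P Q \<Longrightarrow> cg n m P Q"
  using cg_dvd[of m 0] by simp

lemma cg_smult_mod: "cg n m (smult m P) 0"
  unfolding cg_def by (rule exI[of _ P], rule exI[of _ 0]) simp

lemma cg_M: "cg n m (monom 1 n) 1"
  unfolding cg_def by (rule exI[of _ 0], rule exI[of _ 1]) simp

lemma cg_combine:
  assumes "cg n a P 0" "cg n b P 0" "u * a + v * b = 1"
  shows "cg n (a * b) P 0"
proof -
  obtain R1 S1 R2 S2 where 1: "P = smult a R1 + (monom 1 n - 1) * S1" and 2: "P = smult b R2 + (monom 1 n - 1) * S2"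
    using assms(1,2) unfolding cg_def by (metis diff_zero)
  have "P = smult (u * a + v * b) P" using assms(3) by simp
  also have "\<dots> = smult (u*a) P + smult (v*b) P" by (simp add: smult_add_left)
  also have "\<dots> = smult (u*a) (smult b R2 + (monom 1 n - 1) * S2) + smult (v*b) (smult a R1 + (monom 1 n - 1) * S1)"
    using 1 2 by metis
  also have "\<dots> = smult (a*b) (smult u R2 + smult v R1) + (monom 1 n - 1) * (smult (u*a) S2 + smult (v*b) S1)"
    by (simp add: algebra_simps smult_add_right smult_diff_right)
  finally show ?thesis unfolding cg_def by (metis diff_zero)
qed

abbreviation xp :: "nat \<Rightarrow> int poly" where "xp k \<equiv> monom 1 k"
definition pc :: "int poly \<Rightarrow> nat \<Rightarrow> int poly" where "pc P t = pcompose P (xp t)"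

lemma pcompose_monom_gen: "pcompose (monom c k) (q::int poly) = smult c (q ^ k)"
  by (induction k) (auto simp: monom_Suc pcompose_pCons monom_0)

lemma pc_monom[simp]: "pc (monom c k) t = monom c (k * t)"
  unfolding pc_def pcompose_monom_gen by (simp add: monom_power smult_monom mult.commute)

lemma pc_pc: "pc (pc P a) b = pc P (a * b)"
  unfolding pc_def by (simp add: pcompose_assoc[symmetric] pcompose_monom_gen monom_power mult.commute)

lemma pc_add[simp]: "pc (P + Q) t = pc P t + pc Q t" unfolding pc_def by (simp add: pcompose_add)
lemma pc_diff[simp]: "pc (P - Q) t = pc P t - pc Q t" unfolding pc_def by (simp add: pcompose_diff)
lemma pc_mult[simp]: "pc (P * Q) t = pc P t * pc Q t" unfolding pc_def by (simp add: pcompose_mult)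
lemma pc_smult[simp]: "pc (smult c P) t = smult c (pc P t)" unfolding pc_def by (simp add: pcompose_smult)
lemma pc_const[simp]: "pc [:c:] t = [:c:]" unfolding pc_def by simp
lemma pc_1[simp]: "pc 1 t = 1" unfolding pc_def by (simp add: pcompose_1)
lemma pc_0[simp]: "pc 0 t = 0" unfolding pc_def by simp
lemma pc_power[simp]: "pc (P ^ k) t = pc P t ^ k" by (induction k) auto
lemma pc_sum: "pc (sum f A) t = (\<Sum>i\<in>A. pc (f i) t)" unfolding pc_def by (simp add: pcompose_sum)
lemma pc_1_id[simp]: "pc P 1 = P" unfolding pc_def by (simp add: monom_altdef)
lemma pc_of_int[simp]: "pc (of_int c) t = of_int c"
  by (simp add: of_int_poly)

lemma cg_Xpow_mod: "cg n m (xp a) (xp (a mod n))"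
proof -
  have "xp a = xp (a mod n) * (xp n) ^ (a div n)"
    by (simp add: monom_power mult_monom)
  moreover have "cg n m ((xp n) ^ (a div n)) 1"
    using cg_power[OF cg_M, of n m "a div n"] by simp
  ultimately show ?thesis using cg_mult[OF cg_refl[of n m "xp (a mod n)"]] by fastforce
qed

lemma cg_Xpow: "a mod n = b mod n \<Longrightarrow> cg n m (xp a) (xp b)"
  by (metis cg_Xpow_mod cg_sym cg_trans)

lemma cg_pc_inner: "cg n m Q Q' \<Longrightarrow> cg n m (pcompose P Q) (pcompose P Q')"
  by (induction P) (auto simp: pcompose_pCons intro!: cg_add cg_mult)

lemma cg_pc_inner': "a mod n = b mod n \<Longrightarrow> cg n m (pc P a) (pc P b)"
  unfolding pc_def by (intro cg_pc_inner cg_Xpow)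

lemma cg_0_ex: "cg n 0 P 0 \<Longrightarrow> \<exists>S. P = (xp n - 1) * S"
  unfolding cg_def by simp

lemma cg_pc_outer: "cg n m P Q \<Longrightarrow> cg n m (pc P t) (pc Q t)"
proof -
  assume "cg n m P Q"
  then obtain R S where 1: "P - Q = smult m R + (xp n - 1) * S" unfolding cg_def by blast
  have "cg n 0 (xp (n * t)) (xp 0)" by (rule cg_Xpow) simp
  then have "cg n 0 (xp (n * t) - 1) (1 - 1)" by (intro cg_diff) (auto simp: monom_0 one_pCons)
  then have "cg n 0 (xp (n * t) - 1) 0" by simp
  then obtain S' where 2: "xp (n * t) - 1 = (xp n - 1) * S'" using cg_0_ex by blast
  have "pc P t - pc Q t = smult m (pc R t) + (xp n - 1) * (S' * pc S t)"
    using arg_cong[OF 1, of "\<lambda>x. pc x t"] 2 by (simp add: mult.assoc)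
  then show ?thesis unfolding cg_def by blast
qed

lemma cg_n_dvd: "d dvd n \<Longrightarrow> cg n m P Q \<Longrightarrow> cg d m P Q"
proof -
  assume "d dvd n" "cg n m P Q"
  then obtain R S where 1: "P - Q = smult m R + (xp n - 1) * S" unfolding cg_def by blast
  have "cg d 0 (xp n) (xp 0)" by (rule cg_Xpow) (use \<open>d dvd n\<close> in simp)
  then have "cg d 0 (xp n - 1) (1 - 1)" by (intro cg_diff) (auto simp: monom_0 one_pCons)
  then have "cg d 0 (xp n - 1) 0" by simp
  then obtain S' where 2: "xp n - 1 = (xp d - 1) * S'" using cg_0_ex by blast
  have "P - Q = smult m R + (xp d - 1) * (S' * S)" using 1 2 by (simp add: mult.assoc)
  then show ?thesis unfolding cg_def by blast
qed

declare cg_trans[trans]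

lemma cg_iff0: "cg n m P Q \<longleftrightarrow> cg n m (P - Q) 0"
  unfolding cg_def by simp

lemma cg_eqI: "P = Q \<Longrightarrow> cg n m P Q" by simp

lemma cg_mul0: "cg n a x 0 \<Longrightarrow> cg n b y 0 \<Longrightarrow> cg n (a*b) (x*y) 0"
proof -
  assume "cg n a x 0" "cg n b y 0"
  then obtain R S R' S' where 1: "x = smult a R + (xp n - 1) * S" and 2: "y = smult b R' + (xp n - 1) * S'"
    unfolding cg_def by (metis diff_zero)
  have "x * y = smult (a*b) (R*R') + (xp n - 1) * (S * smult b R' + smult a R * S' + (xp n - 1) * S * S')"
    unfolding 1 2 by (simp add: algebra_simps smult_diff_right)
  then show ?thesis unfolding cg_def by (simp, blast)
qed

lemma cg_zero_multR: "cg n m x 0 \<Longrightarrow> cg n m (x*y) 0"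
  using cg_multR[of n m x 0 y] by simp
lemma cg_zero_multL: "cg n m x 0 \<Longrightarrow> cg n m (y*x) 0"
  using cg_multR[of n m x 0 y] by (simp add: mult.commute)

lemma cg_idem_pow: "cg n m (e*e) e \<Longrightarrow> k \<ge> 1 \<Longrightarrow> cg n m (e^k) e"
proof (induction k)
  case 0 then show ?case by simp
next
  case (Suc k)
  show ?case
  proof (cases "k = 0")
    case True then show ?thesis by simp
  next
    case False
    then have "cg n m (e^k) e" using Suc by simp
    then have "cg n m (e * e^k) (e * e)" by (intro cg_mult) auto
    then show ?thesis using Suc(2) by (auto intro: cg_trans)
  qed
qed

lemma cg_pow0: "cg n m x 0 \<Longrightarrow> k \<ge> 1 \<Longrightarrow> cg n m (x^k) 0"
  using cg_power[of n m x 0 k] by (simp add: power_0_left)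

lemma frob_const2: "cg n 2 ([:a:]^2) [:a:]"
proof -
  have "even (a^2 - a)" by simp
  then obtain k where "a^2 - a = 2 * k" by blast
  then have "[:a:]^2 - [:a:] = smult 2 [:k:]" by (simp add: power2_eq_square)
  then show ?thesis unfolding cg_def by (metis add.right_neutral mult_zero_right)
qed

lemma frob_const3: "cg n 3 ([:a:]^3) [:a:]"
proof -
  have "(3::int) dvd (a^3 - a)"
  proof -
    have "a^3 - a = (a - 1) * a * (a + 1)" by (simp add: algebra_simps power3_eq_cube)
    moreover have "3 dvd a \<or> 3 dvd (a - 1) \<or> (3::int) dvd (a + 1)" by presburger
    ultimately show ?thesis by (metis dvd_mult dvd_mult2)
  qed
  then obtain k where "a^3 - a = 3 * k" by blast
  then have "[:a:]^3 - [:a:] = smult 3 [:k:]" by (simp add: power3_eq_cube)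
  then show ?thesis unfolding cg_def by (metis add.right_neutral mult_zero_right)
qed

lemma sq_expand: "((x::int poly) + y)^2 = x^2 + y^2 + smult 2 (x*y)"
proof -
  have "((x::int poly) + y)^2 = x^2 + y^2 + 2*(x*y)" by algebra
  then show ?thesis by (simp add: numeral_mult_conv_smult)
qed

lemma cube_expand: "((x::int poly) + y)^3 = x^3 + y^3 + smult 3 (x*y*(x+y))"
proof -
  have "((x::int poly) + y)^3 = x^3 + y^3 + 3*(x*y*(x+y))" by algebra
  then show ?thesis by (simp add: numeral_mult_conv_smult)
qed

lemma frob: assumes "p = 2 \<or> p = 3" shows "cg n (int p) (P ^ p) (pc P p)"
proof (induction P)
  case 0 then show ?case using assms by auto
next
  case (pCons a Q)
  have pce: "pc (pCons a Q) p = [:a:] + xp p * pc Q p"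
    unfolding pc_def by (simp add: pcompose_pCons)
  have split: "pCons a Q = [:a:] + xp 1 * Q"
    by (simp add: monom_Suc monom_0)
  have xpp: "(xp 1 * Q) ^ p = xp p * Q ^ p" by (simp add: power_mult_distrib monom_power)
  from assms show ?case
  proof
    assume p: "p = 2"
    have "(pCons a Q)^p = [:a:]^2 + (xp 1 * Q)^2 + smult 2 ([:a:] * (xp 1 * Q))"
      unfolding split p by (rule sq_expand)
    also have "cg n (int p) \<dots> ([:a:] + xp p * pc Q p + 0)"
    proof -
      have 1: "cg n 2 ([:a:]^2) [:a:]" by (rule frob_const2)
      have 2: "cg n 2 ((xp 1 * Q)^2) (xp 2 * pc Q 2)" using xpp p pCons(2) by (auto intro: cg_mult)
      have 3: "cg n 2 (smult 2 ([:a:] * (xp 1 * Q))) 0" by (rule cg_smult_mod)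
      show ?thesis using cg_add[OF cg_add[OF 1 2] 3] p by simp
    qed
    finally show ?case unfolding pce by simp
  next
    assume p: "p = 3"
    have "(pCons a Q)^p = [:a:]^3 + (xp 1 * Q)^3 + smult 3 ([:a:] * (xp 1 * Q) * ([:a:] + xp 1 * Q))"
      unfolding split p by (rule cube_expand)
    also have "cg n (int p) \<dots> ([:a:] + xp p * pc Q p + 0)"
    proof -
      have 1: "cg n 3 ([:a:]^3) [:a:]" by (rule frob_const3)
      have 2: "cg n 3 ((xp 1 * Q)^3) (xp 3 * pc Q 3)" using xpp p pCons(2) by (auto intro: cg_mult)
      have 3: "cg n 3 (smult 3 ([:a:] * (xp 1 * Q) * ([:a:] + xp 1 * Q))) 0" by (rule cg_smult_mod)
      show ?thesis using cg_add[OF cg_add[OF 1 2] 3] p by simp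
    qed
    finally show ?case unfolding pce by simp
  qed
qed

lemma frob_iter: assumes "p = 2 \<or> p = 3" shows "cg n (int p) (P ^ (p^k)) (pc P (p^k))"
proof (induction k)
  case 0 then show ?case using pc_1_id[of P] by simp
next
  case (Suc k)
  have "P ^ (p^Suc k) = (P ^ (p^k)) ^ p" by (simp add: power_mult[symmetric] mult.commute)
  also have "cg n (int p) \<dots> ((pc P (p^k)) ^ p)" by (rule cg_power[OF Suc])
  also have "cg n (int p) \<dots> (pc (pc P (p^k)) p)" by (rule frob[OF assms])
  also have "\<dots> = pc P (p ^ Suc k)" by (simp add: pc_pc mult.commute)
  finally show ?case .
qed

definition star :: "nat \<Rightarrow> int poly \<Rightarrow> int poly" where "star n P = pc P (n - 1)"

lemma star_simps[simp]: "star n (P * Q) = star n P * star n Q" "star n (P + Q) = star n P + star n Q"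
  "star n (P - Q) = star n P - star n Q" "star n 1 = 1" "star n 0 = 0" "star n (P ^ k) = star n P ^ k"
  "star n (smult c P) = smult c (star n P)"
  unfolding star_def by auto

lemma star_num[simp]: "star n (numeral k) = numeral k" "pc (numeral k) t = numeral k"
  unfolding star_def pc_def by (simp_all add: numeral_poly)

lemma pc_Suc0[simp]: "pc P (Suc 0) = P" using pc_1_id by simp

lemma pc_comm: "pc (pc P a) b = pc (pc P b) a" by (simp add: pc_pc mult.commute)

lemma cg_star: "cg n m P Q \<Longrightarrow> cg n m (star n P) (star n Q)"
  unfolding star_def by (rule cg_pc_outer)

lemma nn_mod: fixes n :: nat assumes "n \<ge> 1" shows "((n - 1) * (n - 1)) mod n = 1 mod n"
proof -
  obtain k where n: "n = Suc k" using assms by (cases n) auto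
  show ?thesis
  proof (cases k)
    case 0 then show ?thesis using n by simp
  next
    case (Suc j)
    have "(n - 1)*(n-1) = 1 + n * j" using n Suc by (simp add: algebra_simps)
    then show ?thesis by (metis mod_mult_self2 mult.commute)
  qed
qed

lemma star_star: assumes "n \<ge> 1" shows "cg n m (star n (star n P)) P"
proof -
  have "cg n m (pc P ((n-1)*(n-1))) (pc P 1)" by (rule cg_pc_inner'[OF nn_mod[OF assms]])
  then show ?thesis by (simp add: star_def pc_pc)
qed

lemma lift_idem:
  assumes "cg n m (e*e) e"
  shows "cg n (m*m) ((3*e^2 - 2*e^3) * (3*e^2 - 2*e^3)) (3*e^2 - 2*e^3)" "cg n m (3*e^2 - 2*e^3) e"
proof -
  have z: "cg n m (e*e - e) 0" using assms cg_iff0 by blast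
  have "(3*e^2 - 2*e^3) * (3*e^2 - 2*e^3) - (3*e^2 - 2*e^3) = ((e*e - e) * (e*e - e)) * (4*e^2 - 4*e - 3)"
    by algebra
  moreover have "cg n (m*m) (((e*e - e) * (e*e - e)) * (4*e^2 - 4*e - 3)) 0"
    by (intro cg_zero_multR cg_mul0 z)
  ultimately show "cg n (m*m) ((3*e^2 - 2*e^3) * (3*e^2 - 2*e^3)) (3*e^2 - 2*e^3)"
    using cg_iff0 by metis
  have "(3*e^2 - 2*e^3) - e = (e*e - e) * (1 - 2*e)" by algebra
  moreover have "cg n m ((e*e - e) * (1 - 2*e)) 0" by (intro cg_zero_multR z)
  ultimately show "cg n m (3*e^2 - 2*e^3) e" using cg_iff0 by metis
qed

lemma idem_unique:
  assumes x: "cg n (m*m) (x*x) x" and y: "cg n (m*m) (y*y) y" and xy: "cg n m x y"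
  shows "cg n (m*m) x y"
proof -
  have z: "cg n m (x - y) 0" using xy cg_iff0 by blast
  have "(x - y) * (x - y) * (x - y) = (x*x)*x - 3*((x*x)*y) + 3*(x*(y*y)) - (y*y)*y" by algebra
  also have "cg n (m*m) \<dots> (x*x - 3*(x*y) + 3*(x*y) - y*y)"
    by (intro cg_diff cg_add cg_mult cg_refl x y)
  also have "cg n (m*m) \<dots> (x - 3*(x*y) + 3*(x*y) - y)"
    by (intro cg_diff cg_add cg_mult cg_refl x y)
  also have "\<dots> = x - y" by simp
  finally have 1: "cg n (m*m) ((x - y) * (x - y) * (x - y)) (x - y)" .
  have "cg n (m*m) ((x - y) * (x - y) * (x - y)) 0"
    by (intro cg_zero_multR cg_mul0 z)
  then show ?thesis using 1 cg_iff0 cg_sym cg_trans by metis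
qed

lemma multiplier:
  fixes p n f j t :: nat and A :: "int poly"
  assumes p: "p = 2 \<or> p = 3" and n: "n \<ge> 1" and f: "f \<ge> 1" and pf: "p^f mod n = 1 mod n"
    and tj: "t mod n = p^j mod n"
    and H: "cg n (int p * int p) (A * star n A) 0"
  shows "cg n (int p * int p) (pc A t * star n A) 0"
proof -
  define m where "m = int p"
  define q where "q = p^f"
  have p2: "p \<ge> 2" using p by auto
  have "p^1 \<le> p^f" using f p2 by (intro power_increasing) auto
  then have q2: "q \<ge> 2" unfolding q_def using p2 by simp
  have F: "cg n m (P^q) P" for P
  proof -
    have "cg n m (P^q) (pc P q)" unfolding m_def q_def by (rule frob_iter[OF p])
    also have "cg n m (pc P q) (pc P 1)" by (rule cg_pc_inner') (simp add: q_def pf)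
    finally show ?thesis by simp
  qed
  have Hm: "cg n m (A * star n A) 0" using H unfolding m_def by (rule cg_dvd[rotated]) simp
  define e where "e = A^(q-1)"
  have Ae: "cg n m (A*e) A"
  proof -
    have "A*e = A^q" unfolding e_def using q2 by (metis Suc_diff_1 less_le_trans pos2 power_Suc)
    then show ?thesis using F by simp
  qed
  have ee: "cg n m (e*e) e"
  proof -
    have qq: "q - 1 + (q - 1) = q + (q - 2)" using q2 by arith
    have "e*e = A^(q - 1 + (q - 1))" unfolding e_def by (simp add: power_add)
    also have "\<dots> = A^q * A^(q-2)" unfolding qq by (simp add: power_add)
    also have "cg n m \<dots> (A * A^(q-2))" by (intro cg_mult F cg_refl)
    also have "A * A^(q-2) = e" unfolding e_def using q2
      by (metis Suc_diff_Suc Suc_1 diff_Suc_1 less_le_trans lessI power_Suc)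
    finally show ?thesis .
  qed
  have et: "cg n m (pc e t) e"
  proof -
    have "cg n m (pc e t) (pc e (p^j))" by (rule cg_pc_inner') (simp add: tj)
    also have "cg n m (pc e (p^j)) (e^(p^j))" unfolding m_def by (rule cg_sym[OF frob_iter[OF p]])
    also have "cg n m (e^(p^j)) e" by (rule cg_idem_pow[OF ee]) (use p2 in simp)
    finally show ?thesis .
  qed
  have ees: "cg n m (e * star n e) 0"
  proof -
    have "e * star n e = (A * star n A)^(q-1)" unfolding e_def by (simp add: power_mult_distrib)
    then show ?thesis using cg_pow0[OF Hm, of "q-1"] q2 by simp
  qed
  define E where "E = 3*e^2 - 2*e^3"
  have EE: "cg n (m*m) (E*E) E" and Ee: "cg n m E e" unfolding E_def using lift_idem[OF ee] by auto
  define E' where "E' = star n E"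
  have E'E': "cg n (m*m) (E'*E') E'" unfolding E'_def using cg_star[OF EE] by simp
  have E'e: "cg n m E' (star n e)" unfolding E'_def by (rule cg_star[OF Ee])
  have EE'm: "cg n m (E*E') 0"
  proof -
    have "cg n m (E*E') (e * star n e)" by (intro cg_mult Ee E'e)
    then show ?thesis using ees by (rule cg_trans)
  qed
  have EE'0: "cg n (m*m) (E*E') 0"
  proof -
    have "E*E' = (E*E')*1" by simp
    have "cg n (m*m) (E*E') ((E*E)*(E'*E'))" by (intro cg_sym[OF cg_mult] EE E'E')
    also have "(E*E)*(E'*E') = (E*E')*(E*E')" by (simp add: ac_simps)
    also have "cg n (m*m) \<dots> 0" by (intro cg_mul0 EE'm)
    finally show ?thesis .
  qed
  define u where "u = A^(q-2)"
  have Au: "A*u = e" unfolding u_def e_def using q2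
    by (metis Suc_diff_Suc Suc_1 diff_Suc_1 less_le_trans lessI power_Suc)
  define d where "d = A*u*E - E"
  have d0: "cg n m d 0"
  proof -
    have "cg n m (e*E) (e*e)" by (intro cg_mult cg_refl Ee)
    also have "cg n m (e*e) e" by (rule ee)
    also have "cg n m e E" by (rule cg_sym[OF Ee])
    finally have "cg n m (e*E) E" .
    then show ?thesis unfolding d_def Au using cg_iff0 by blast
  qed
  define V where "V = u*E*(E - d)"
  have AV: "cg n (m*m) (A*V) E"
  proof -
    have "A*V = E*E - d*d" unfolding V_def d_def by (simp add: algebra_simps)
    also have "cg n (m*m) \<dots> (E - 0)" by (intro cg_diff EE cg_mul0 d0)
    finally show ?thesis by simp
  qed
  define Y where "Y = star n A * E"
  have AY: "cg n (m*m) (A*Y) 0"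
  proof -
    have "A*Y = (A * star n A) * E" unfolding Y_def by (simp add: ac_simps)
    then show ?thesis using cg_zero_multR[OF H[folded m_def], of E] by metis
  qed
  have Y0: "cg n (m*m) Y 0"
  proof -
    have "Y = star n A * E" by (simp add: Y_def)
    also have "cg n (m*m) \<dots> (star n A * (E*E))" by (intro cg_mult cg_refl cg_sym[OF EE])
    also have "star n A * (E*E) = E * Y" unfolding Y_def by (simp add: ac_simps)
    also have "cg n (m*m) \<dots> ((A*V)*Y)" by (intro cg_mult cg_refl cg_sym[OF AV])
    also have "(A*V)*Y = V*(A*Y)" by (simp add: ac_simps)
    also have "cg n (m*m) \<dots> 0" by (rule cg_zero_multL[OF AY])
    finally show ?thesis .
  qed
  have AE'0: "cg n (m*m) (A*E') 0"
  proof -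
    have "cg n (m*m) (A*E') (star n (star n A) * E')" by (intro cg_mult cg_refl cg_sym[OF star_star[OF n]])
    also have "star n (star n A) * E' = star n Y" unfolding Y_def E'_def by simp
    also have "cg n (m*m) \<dots> (star n 0)" by (rule cg_star[OF Y0])
    finally show ?thesis by simp
  qed
  define Fp where "Fp = 1 - E - E'"
  have Af0: "cg n m (A*Fp) 0"
  proof -
    have "cg n m (A*Fp) (A*(1 - e - star n e))" unfolding Fp_def by (intro cg_mult cg_diff cg_refl Ee E'e)
    also have "A*(1 - e - star n e) = A - A*e - (A*e)*star n e + A * (e * star n e - star n e) "
      by (simp add: algebra_simps)
    also have "cg n m \<dots> (A - A - A * star n e + A * (0 - star n e))"
      by (intro cg_add cg_diff cg_mult cg_refl Ae ees)
    also have "\<dots> = -(2 * (A * star n e))" by (simp add: algebra_simps)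
    also have "cg n m \<dots> (-(2 * ((A*e) * star n e)))" by (intro cg_uminus cg_mult cg_refl cg_sym[OF Ae])
    also have "(A*e) * star n e = A * (e * star n e)" by (simp add: ac_simps)
    also have "cg n m (-(2 * \<dots>)) (-(2 * (A * 0)))" by (intro cg_uminus cg_mult cg_refl ees)
    finally show ?thesis by simp
  qed
  define C where "C = pc A t * star n A"
  have CE: "cg n (m*m) (C*E) 0"
  proof -
    have "C*E = pc A t * Y" unfolding C_def Y_def by (simp add: ac_simps)
    then show ?thesis using cg_zero_multL[OF Y0] by simp
  qed
  have Et: "cg n (m*m) (pc E t) E"
  proof (rule idem_unique)
    show "cg n (m*m) (pc E t * pc E t) (pc E t)" using cg_pc_outer[OF EE, of t] by simp
    show "cg n (m*m) (E*E) E" by (rule EE)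
    have "cg n m (pc E t) (pc e t)" by (rule cg_pc_outer[OF Ee])
    also have "cg n m (pc e t) e" by (rule et)
    also have "cg n m e E" by (rule cg_sym[OF Ee])
    finally show "cg n m (pc E t) E" .
  qed
  have E't: "cg n (m*m) (pc E' t) E'"
  proof -
    have "pc E' t = star n (pc E t)" unfolding E'_def star_def by (rule pc_comm)
    also have "cg n (m*m) \<dots> E'" unfolding E'_def by (rule cg_star[OF Et])
    finally show ?thesis .
  qed
  have CE': "cg n (m*m) (C*E') 0"
  proof -
    have "C*E' = pc A t * E' * star n A" unfolding C_def by (simp add: ac_simps)
    also have "cg n (m*m) \<dots> (pc A t * pc E' t * star n A)" by (intro cg_mult cg_refl cg_sym[OF E't])
    also have "pc A t * pc E' t * star n A = pc (A*E') t * star n A" by simp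
    also have "cg n (m*m) \<dots> (pc 0 t * star n A)" by (intro cg_mult cg_refl cg_pc_outer AE'0)
    finally show ?thesis by simp
  qed
  have FF: "cg n (m*m) (Fp*Fp) Fp"
  proof -
    have "Fp*Fp = 1 - E - E' + (E*E - E) + (E'*E' - E') + 2*(E*E')" unfolding Fp_def by algebra
    also have "cg n (m*m) \<dots> (1 - E - E' + 0 + 0 + 2*0)"
      using EE E'E' EE'0 cg_iff0 by (intro cg_add cg_mult cg_refl) blast+
    finally show ?thesis unfolding Fp_def by simp
  qed
  have Ft: "cg n (m*m) (pc Fp t) Fp" unfolding Fp_def by (simp, intro cg_diff cg_refl Et E't)
  have Fs: "cg n (m*m) (star n Fp) Fp"
  proof -
    have "star n Fp = 1 - E' - star n (star n E)" unfolding Fp_def E'_def by simp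
    also have "cg n (m*m) \<dots> (1 - E' - E)" by (intro cg_diff cg_refl star_star n)
    finally show ?thesis unfolding Fp_def by (simp add: algebra_simps)
  qed
  have CF: "cg n (m*m) (C*Fp) 0"
  proof -
    have "cg n (m*m) (C*Fp) (C*(Fp*Fp))" by (intro cg_mult cg_refl cg_sym[OF FF])
    also have "C*(Fp*Fp) = (pc A t * Fp) * (star n A * Fp)" unfolding C_def by (simp add: ac_simps)
    also have "cg n (m*m) \<dots> ((pc A t * pc Fp t) * (star n A * star n Fp))"
      by (intro cg_mult cg_refl cg_sym[OF Ft] cg_sym[OF Fs])
    also have "\<dots> = pc (A*Fp) t * star n (A*Fp)" by simp
    also have "cg n (m*m) \<dots> 0" using cg_pc_outer[OF Af0, of t] cg_star[OF Af0]
      by (intro cg_mul0) auto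
    finally show ?thesis .
  qed
  have "C = C*E + C*E' + C*Fp" unfolding Fp_def by (simp add: algebra_simps)
  also have "cg n (m*m) \<dots> (0 + 0 + 0)" by (intro cg_add CE CE' CF)
  finally show ?thesis unfolding C_def m_def by simp
qed

definition pf :: "nat \<Rightarrow> (nat \<Rightarrow> int) \<Rightarrow> int poly" where
  "pf n c = (\<Sum>k<n. monom (c k) k)"

definition red :: "nat \<Rightarrow> int poly \<Rightarrow> int poly" where
  "red n R = (\<Sum>i\<le>degree R. monom (coeff R i) (i mod n))"

definition autocorr :: "nat \<Rightarrow> (nat \<Rightarrow> int) \<Rightarrow> nat \<Rightarrow> int" where
  "autocorr n c d = (\<Sum>j<n. c j * c ((j + d) mod n))"

lemma coeff_pf: "coeff (pf n c) k = (if k < n then c k else 0)"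
  unfolding pf_def by (simp add: coeff_sum coeff_monom)

lemma coeff_red_high: "0 < n \<Longrightarrow> n \<le> k \<Longrightarrow> coeff (red n R) k = 0"
  unfolding red_def by (auto simp: coeff_sum coeff_monom intro!: sum.neutral)
    (metis mod_less_divisor not_le)

lemma cg_red: "cg n 0 R (red n R)"
proof -
  have "cg n 0 (\<Sum>i\<le>degree R. monom (coeff R i) i) (red n R)"
    unfolding red_def
  proof (intro cg_sum)
    fix i show "cg n 0 (monom (coeff R i) i) (monom (coeff R i) (i mod n))"
      using cg_smult[OF cg_Xpow_mod[of n 0 i], of "coeff R i"] by (simp add: smult_monom)
  qed
  then show ?thesis by (simp add: poly_as_sum_of_monoms)
qed

lemma degree_M: "0 < n \<Longrightarrow> degree (xp n - 1 :: int poly) = n"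
proof -
  assume n: "0 < n"
  have "coeff (xp n - 1 :: int poly) n = 1" using n by (simp add: coeff_monom)
  then have "n \<le> degree (xp n - 1 :: int poly)" by (intro le_degree) simp
  moreover have "degree (xp n - 1 :: int poly) \<le> n"
    by (rule degree_le) (auto simp: coeff_monom coeff_1)
  ultimately show ?thesis by simp
qed

lemma small_mult_M:
  assumes n: "0 < n" and hi: "\<And>k. n \<le> k \<Longrightarrow> coeff P k = 0" and P: "P = (xp n - 1) * T"
  shows "P = 0"
proof (rule ccontr)
  assume "P \<noteq> 0"
  then have T: "T \<noteq> 0" using P by auto
  have M: "(xp n - 1 :: int poly) \<noteq> 0" using degree_M[OF n] n by auto
  have "degree P = n + degree T" unfolding P using degree_mult_eq[OF M T] degree_M[OF n] by simp
  then have "coeff P (degree P) = 0" using hi by simp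
  then show False using \<open>P \<noteq> 0\<close> by simp
qed

lemma cextract:
  assumes n: "0 < n" and H: "cg n m (pf n c) (pf n d)" and k: "k < n"
  shows "m dvd (c k - d k)"
proof -
  obtain R S where 1: "pf n c - pf n d = smult m R + (xp n - 1) * S" using H unfolding cg_def by blast
  obtain S2 where 2: "R - red n R = (xp n - 1) * S2" using cg_red[of n R] unfolding cg_def by auto
  define P where "P = pf n c - pf n d - smult m (red n R)"
  have r: "red n R = R - (xp n - 1) * S2" using 2 by (simp add: algebra_simps)
  have "P = (xp n - 1) * (S + smult m S2)"
    unfolding P_def 1 r by (simp add: smult_diff_right distrib_left)
  moreover have "coeff P j = 0" if "n \<le> j" for j
    unfolding P_def using that n by (simp add: coeff_pf coeff_red_high)
  ultimately have "P = 0" using small_mult_M[OF n] by blast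
  then have "coeff (pf n c - pf n d) k = coeff (smult m (red n R)) k" unfolding P_def by simp
  then show ?thesis using k by (simp add: coeff_pf)
qed

lemma cextract_eq: "0 < n \<Longrightarrow> cg n 0 (pf n c) (pf n d) \<Longrightarrow> k < n \<Longrightarrow> c k = d k"
  using cextract[of n 0 c d k] by simp

lemma cg_cancel:
  assumes n: "0 < n" and m: "m \<noteq> 0" and H: "cg n 0 (smult m P) 0"
  shows "cg n 0 P 0"
proof -
  have "cg n 0 (smult m (red n P)) (smult m P)" by (intro cg_smult cg_sym[OF cg_red])
  then have "cg n 0 (smult m (red n P)) 0" using H cg_trans by blast
  then obtain T where "smult m (red n P) = (xp n - 1) * T" using cg_0_ex by blast
  moreover have "coeff (smult m (red n P)) k = 0" if "n \<le> k" for k using that n by (simp add: coeff_red_high)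
  ultimately have "smult m (red n P) = 0" using small_mult_M[OF n] by blast
  then have "red n P = 0" using m by simp
  then show ?thesis using cg_red[of n P] by simp
qed

lemma pf_star: "star n (pf n c) = (\<Sum>j<n. monom (c j) (j * (n - 1)))"
  unfolding pf_def star_def by (simp add: pc_sum)

lemma reindex_shift:
  assumes n: "0 < n"
  shows "(\<Sum>i<n. monom (c i * c j) ((i + j * (n - 1)) mod n)) = (\<Sum>d<n. monom (c ((d + j) mod n) * c j) d)"
proof -
  have e1: "x + j * (n - 1) + j = x + j * n" for x using n by (cases n) (auto simp: algebra_simps)
  have e2: "x + j + j * (n - 1) = x + j * n" for x using n by (cases n) (auto simp: algebra_simps)
  have k1: "((a + j*(n-1)) mod n + j) mod n = a" if "a < n" for a
  proof -
    have "((a + j*(n-1)) mod n + j) mod n = (a + j*(n-1) + j) mod n" by (simp add: mod_add_left_eq)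
    also have "\<dots> = a" unfolding e1 using that by simp
    finally show ?thesis .
  qed
  have k2: "((b + j) mod n + j*(n-1)) mod n = b" if "b < n" for b
  proof -
    have "((b + j) mod n + j*(n-1)) mod n = (b + j + j*(n-1)) mod n" by (simp add: mod_add_left_eq)
    also have "\<dots> = b" unfolding e2 using that by simp
    finally show ?thesis .
  qed
  show ?thesis
    by (rule sum.reindex_bij_witness[where i = "\<lambda>d. (d + j) mod n" and j = "\<lambda>i. (i + j * (n - 1)) mod n"])
      (use n in \<open>auto simp: k1[unfolded One_nat_def] k2[unfolded One_nat_def]\<close>)
qed

lemma autocorr_cg:
  assumes n: "0 < n"
  shows "cg n 0 (pf n c * star n (pf n c)) (pf n (autocorr n c))"
proof -
  have "pf n c * star n (pf n c) = (\<Sum>j<n. \<Sum>i<n. monom (c i * c j) (i + j * (n - 1)))"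
    unfolding pf_star unfolding pf_def
    by (simp add: sum_distrib_left sum_distrib_right mult_monom)
  also have "cg n 0 \<dots> (\<Sum>j<n. \<Sum>i<n. monom (c i * c j) ((i + j * (n - 1)) mod n))"
    by (intro cg_sum) (metis cg_Xpow_mod cg_smult smult_monom mult.right_neutral)
  also have "\<dots> = (\<Sum>j<n. \<Sum>d<n. monom (c ((d + j) mod n) * c j) d)"
    by (intro sum.cong refl reindex_shift[OF n])
  also have "\<dots> = (\<Sum>d<n. \<Sum>j<n. monom (c ((d + j) mod n) * c j) d)"
    by (rule sum.swap)
  also have "\<dots> = pf n (autocorr n c)"
    unfolding pf_def autocorr_def
    by (simp add: monom_sum mult.commute add.commute)
  finally show ?thesis .
qed

lemma pf_const: "0 < n \<Longrightarrow> pf n (\<lambda>k. if k = 0 then K else 0) = [:K:]"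
  unfolding pf_def by (simp add: monom_0 if_distrib[of "\<lambda>x. monom x _"] sum.delta' cong: if_cong)

lemma autocorr_from_cg:
  assumes n: "0 < n" and H: "cg n 0 (pf n c * star n (pf n c)) [:K:]" and d: "d < n"
  shows "autocorr n c d = (if d = 0 then K else 0)"
proof -
  have "cg n 0 (pf n (autocorr n c)) (pf n (\<lambda>k. if k = 0 then K else 0))"
    using cg_trans[OF cg_sym[OF autocorr_cg[OF n]] H] pf_const[OF n] by simp
  from cextract_eq[OF n this d] show ?thesis .
qed

lemma shift_blk: "(\<Sum>i\<in>{x*a..<x*a+a}. (g::nat \<Rightarrow> 'b::comm_monoid_add) i) = (\<Sum>y<a. g (y + x*a))"
  using sum.shift_bounds_nat_ivl[of g 0 "x*a" a] by (simp add: atLeast0LessThan add.commute)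

lemma cg_star_gen: "cg a m P Q \<Longrightarrow> cg a m (star n P) (star n Q)"
  unfolding star_def by (rule cg_pc_outer)

lemma proj:
  assumes n: "n = b * a" and a: "0 < a"
  shows "cg a 0 (pf n c) (pf a (\<lambda>y. \<Sum>x<b. c (x * a + y)))"
proof -
  have "pf n c = (\<Sum>x<b. \<Sum>i\<in>{x * a..<x * a + a}. monom (c i) i)"
    unfolding pf_def n by (rule sum.nat_group[symmetric])
  also have "\<dots> = (\<Sum>x<b. \<Sum>y<a. monom (c (y + x * a)) (y + x * a))"
    by (simp only: shift_blk)
  also have "cg a 0 \<dots> (\<Sum>x<b. \<Sum>y<a. monom (c (y + x * a)) y)"
  proof (intro cg_sum)
    fix x y
    have "cg a 0 (xp (y + x * a)) (xp y)" by (rule cg_Xpow) simp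
    then show "cg a 0 (monom (c (y + x * a)) (y + x * a)) (monom (c (y + x * a)) y)"
      using cg_smult by (metis mult.right_neutral smult_monom)
  qed
  also have "\<dots> = (\<Sum>y<a. \<Sum>x<b. monom (c (y + x * a)) y)" by (rule sum.swap)
  also have "\<dots> = pf a (\<lambda>y. \<Sum>x<b. c (x * a + y))"
    unfolding pf_def monom_sum by (intro sum.cong refl) (simp add: add.commute)
  finally show ?thesis .
qed

lemma star_proj:
  assumes "n = b * a" "0 < a" "0 < b"
  shows "cg a m (star n P) (star a P)"
proof -
  obtain k where b: "b = Suc k" using assms by (cases b) auto
  have "n - 1 = (a - 1) + a * k" using assms b by (cases a) (auto simp: algebra_simps)
  then have "(n - 1) mod a = (a - 1) mod a" by simp
  then show ?thesis unfolding star_def by (rule cg_pc_inner')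
qed

lemma proj_energy:
  assumes n: "n = b * a" and a: "0 < a" and b: "0 < b"
    and H: "cg n 0 (pf n c * star n (pf n c)) [:K:]"
  shows "(\<Sum>y<a. (\<Sum>x<b. c (x * a + y))^2) = K"
proof -
  define S where "S = (\<lambda>y. \<Sum>x<b. c (x * a + y))"
  have 1: "cg a 0 (pf n c * star n (pf n c)) [:K:]" using H n by (intro cg_n_dvd[of a n]) auto
  have pS: "cg a 0 (pf n c) (pf a S)" unfolding S_def by (rule proj[OF n a])
  have "cg a 0 (pf a S * star a (pf a S)) (pf n c * star n (pf n c))"
  proof (intro cg_mult cg_sym[OF pS])
    have "cg a 0 (star n (pf n c)) (star n (pf a S))" by (rule cg_star_gen[OF pS])
    also have "cg a 0 \<dots> (star a (pf a S))" by (rule star_proj[OF n a b])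
    finally show "cg a 0 (star a (pf a S)) (star n (pf n c))" by (rule cg_sym)
  qed
  then have "cg a 0 (pf a S * star a (pf a S)) [:K:]" using 1 by (rule cg_trans)
  from autocorr_from_cg[OF a this a] have "autocorr a S 0 = K" by simp
  then show ?thesis unfolding autocorr_def S_def by (simp add: power2_eq_square)
qed

lemma pf_cong: "(\<And>k. k < n \<Longrightarrow> c k = d k) \<Longrightarrow> pf n c = pf n d"
  unfolding pf_def by (intro sum.cong) auto

lemma W_to_A:
  assumes W: "is_CW n k W" and n: "0 < n"
  shows "cg n 0 (pf n (\<lambda>j. W 0 j) * star n (pf n (\<lambda>j. W 0 j))) [:int k:]"
proof -
  define a where "a = (\<lambda>j. W 0 j)"
  have circ: "\<And>i j. i < n \<Longrightarrow> j < n \<Longrightarrow> W i j = W 0 ((j + n - i) mod n)"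
    and orth: "\<And>i j. i < n \<Longrightarrow> j < n \<Longrightarrow> (\<Sum>l<n. W i l * W j l) = (if i = j then int k else 0)"
  proof -
    have c: "is_circulant n W" and o: "\<forall>i < n. \<forall>j < n. (\<Sum>l<n. W i l * W j l) = (if i = j then int k else 0)"
      using W unfolding is_CW_def by blast+
    show "\<And>i j. i < n \<Longrightarrow> j < n \<Longrightarrow> W i j = W 0 ((j + n - i) mod n)" using c unfolding is_circulant_def by blast
    show "\<And>i j. i < n \<Longrightarrow> j < n \<Longrightarrow> (\<Sum>l<n. W i l * W j l) = (if i = j then int k else 0)" using o by blast
  qed
  have ac: "autocorr n a d = (if d = 0 then int k else 0)" if d: "d < n" for d
  proof -
    define j' where "j' = (n - d) mod n"
    have j': "j' < n" unfolding j'_def using n by simp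
    have o1: "(\<Sum>l<n. W 0 l * W j' l) = (if 0 = j' then int k else 0)" using orth[OF n j'] .
    have o2: "W j' l = a ((l + d) mod n)" if l: "l < n" for l
    proof -
      have "W j' l = W 0 ((l + n - j') mod n)" using circ[OF j' l] .
      moreover have "(l + n - j') mod n = (l + d) mod n"
      proof (cases "d = 0")
        case True then show ?thesis unfolding j'_def by simp
      next
        case False
        then have "j' = n - d" unfolding j'_def using d by simp
        then show ?thesis using d False by simp
      qed
      ultimately show ?thesis unfolding a_def by simp
    qed
    have o3: "(0 = j') = (d = 0)"
    proof (cases "d = 0")
      case False
      then have "n - d < n" "0 < n - d" using d by auto
      then have "j' = n - d" unfolding j'_def by simp
      then show ?thesis using \<open>0 < n - d\<close> False by simp
    qed (simp add: j'_def)
    have "autocorr n a d = (\<Sum>l<n. W 0 l * W j' l)"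
      unfolding autocorr_def by (intro sum.cong refl) (simp add: o2 a_def)
    then show ?thesis using o1 o3 by simp
  qed
  have "cg n 0 (pf n a * star n (pf n a)) (pf n (autocorr n a))" by (rule autocorr_cg[OF n])
  also have "pf n (autocorr n a) = pf n (\<lambda>d. if d = 0 then int k else 0)" by (rule pf_cong) (simp add: ac)
  also have "\<dots> = [:int k:]" by (rule pf_const[OF n])
  finally show ?thesis unfolding a_def .
qed

lemma W_entries: assumes W: "is_CW n k W" and j: "j < n" shows "W 0 j \<in> {0, 1, -1}"
proof -
  have h: "\<forall>i < n. \<forall>j < n. W i j \<in> {0, 1, -1}" using W unfolding is_CW_def by blast
  have "0 < n" using j by simp
  then show ?thesis using h j by blast
qed

lemma La: "t \<in> {-1,0,1} \<Longrightarrow> u \<in> {-1,0,1} \<Longrightarrow> v \<in> {-1,0,1} \<Longrightarrow> (t + 5*u + 5*v)^2 \<le> 12 \<Longrightarrow> u + v = (0::int)"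
  by auto

lemma Lb:
  fixes p1 p2 t1 t2 :: int
  assumes p1: "p1 \<in> {-1,0,1}" and p2: "p2 \<in> {-1,0,1}" and t: "t1 + t2 = 0"
    and H: "5*(p1 + 3*t1)^2 + 5*(p2 + 3*t2)^2 \<le> 36"
  shows "t1 = 0"
proof (rule ccontr)
  assume t1: "t1 \<noteq> 0"
  have a1: "\<bar>2::int\<bar> \<le> \<bar>p1 + 3*t1\<bar>" using p1 t1 by auto
  have a2: "\<bar>2::int\<bar> \<le> \<bar>p2 + 3*t2\<bar>" using p2 t1 t by auto
  have "2^2 \<le> (p1 + 3*t1)^2" using a1 abs_le_square_iff by blast
  moreover have "2^2 \<le> (p2 + 3*t2)^2" using a2 abs_le_square_iff by blast
  ultimately show False using H by simp
qed

lemma Lc: "x1 \<in> {-1,0,1} \<Longrightarrow> x2 \<in> {-1,0,1} \<Longrightarrow> x3 \<in> {-1,0,1} \<Longrightarrow> x4 \<in> {-1,0,1} \<Longrightarrow>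
  x1 + x2 + x3 + x4 = 0 \<Longrightarrow> x1*x1 + x2*x2 + x3*x3 + x4*x4 \<in> {0,2,4::int}"
  by auto

lemma final:
  fixes b :: "nat \<Rightarrow> int"
  assumes vals: "\<forall>i<143. b i \<in> {-1,0,1}"
    and inv: "\<forall>i<143. b i = b ((3*i) mod 143)"
    and w: "(\<Sum>i<143. b i * b i) = 36"
    and e13: "(\<Sum>y<13. (\<Sum>x<11. b (x * 13 + y))^2) = 36"
    and e11: "(\<Sum>y<11. (\<Sum>x<13. b (x * 11 + y))^2) = 36"
  shows False
proof -
  have e_3: "b 3 = b 1" using inv[rule_format, of 1] by simp
  have e_9: "b 9 = b 1" using inv[rule_format, of 3] e_3 by simp
  have e_27: "b 27 = b 1" using inv[rule_format, of 9] e_9 by simp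
  have e_81: "b 81 = b 1" using inv[rule_format, of 27] e_27 by simp
  have e_100: "b 100 = b 1" using inv[rule_format, of 81] e_81 by simp
  have e_14: "b 14 = b 1" using inv[rule_format, of 100] e_100 by simp
  have e_42: "b 42 = b 1" using inv[rule_format, of 14] e_14 by simp
  have e_126: "b 126 = b 1" using inv[rule_format, of 42] e_42 by simp
  have e_92: "b 92 = b 1" using inv[rule_format, of 126] e_126 by simp
  have e_133: "b 133 = b 1" using inv[rule_format, of 92] e_92 by simp
  have e_113: "b 113 = b 1" using inv[rule_format, of 133] e_133 by simp
  have e_53: "b 53 = b 1" using inv[rule_format, of 113] e_113 by simp
  have e_16: "b 16 = b 1" using inv[rule_format, of 53] e_53 by simp
  have e_48: "b 48 = b 1" using inv[rule_format, of 16] e_16 by simp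
  have e_6: "b 6 = b 2" using inv[rule_format, of 2] by simp
  have e_18: "b 18 = b 2" using inv[rule_format, of 6] e_6 by simp
  have e_54: "b 54 = b 2" using inv[rule_format, of 18] e_18 by simp
  have e_19: "b 19 = b 2" using inv[rule_format, of 54] e_54 by simp
  have e_57: "b 57 = b 2" using inv[rule_format, of 19] e_19 by simp
  have e_28: "b 28 = b 2" using inv[rule_format, of 57] e_57 by simp
  have e_84: "b 84 = b 2" using inv[rule_format, of 28] e_28 by simp
  have e_109: "b 109 = b 2" using inv[rule_format, of 84] e_84 by simp
  have e_41: "b 41 = b 2" using inv[rule_format, of 109] e_109 by simp
  have e_123: "b 123 = b 2" using inv[rule_format, of 41] e_41 by simp
  have e_83: "b 83 = b 2" using inv[rule_format, of 123] e_123 by simp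
  have e_106: "b 106 = b 2" using inv[rule_format, of 83] e_83 by simp
  have e_32: "b 32 = b 2" using inv[rule_format, of 106] e_106 by simp
  have e_96: "b 96 = b 2" using inv[rule_format, of 32] e_32 by simp
  have e_12: "b 12 = b 4" using inv[rule_format, of 4] by simp
  have e_36: "b 36 = b 4" using inv[rule_format, of 12] e_12 by simp
  have e_108: "b 108 = b 4" using inv[rule_format, of 36] e_36 by simp
  have e_38: "b 38 = b 4" using inv[rule_format, of 108] e_108 by simp
  have e_114: "b 114 = b 4" using inv[rule_format, of 38] e_38 by simp
  have e_56: "b 56 = b 4" using inv[rule_format, of 114] e_114 by simp
  have e_25: "b 25 = b 4" using inv[rule_format, of 56] e_56 by simp
  have e_75: "b 75 = b 4" using inv[rule_format, of 25] e_25 by simp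
  have e_82: "b 82 = b 4" using inv[rule_format, of 75] e_75 by simp
  have e_103: "b 103 = b 4" using inv[rule_format, of 82] e_82 by simp
  have e_23: "b 23 = b 4" using inv[rule_format, of 103] e_103 by simp
  have e_69: "b 69 = b 4" using inv[rule_format, of 23] e_23 by simp
  have e_64: "b 64 = b 4" using inv[rule_format, of 69] e_69 by simp
  have e_49: "b 49 = b 4" using inv[rule_format, of 64] e_64 by simp
  have e_15: "b 15 = b 5" using inv[rule_format, of 5] by simp
  have e_45: "b 45 = b 5" using inv[rule_format, of 15] e_15 by simp
  have e_135: "b 135 = b 5" using inv[rule_format, of 45] e_45 by simp
  have e_119: "b 119 = b 5" using inv[rule_format, of 135] e_135 by simp
  have e_71: "b 71 = b 5" using inv[rule_format, of 119] e_119 by simp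
  have e_70: "b 70 = b 5" using inv[rule_format, of 71] e_71 by simp
  have e_67: "b 67 = b 5" using inv[rule_format, of 70] e_70 by simp
  have e_58: "b 58 = b 5" using inv[rule_format, of 67] e_67 by simp
  have e_31: "b 31 = b 5" using inv[rule_format, of 58] e_58 by simp
  have e_93: "b 93 = b 5" using inv[rule_format, of 31] e_31 by simp
  have e_136: "b 136 = b 5" using inv[rule_format, of 93] e_93 by simp
  have e_122: "b 122 = b 5" using inv[rule_format, of 136] e_136 by simp
  have e_80: "b 80 = b 5" using inv[rule_format, of 122] e_122 by simp
  have e_97: "b 97 = b 5" using inv[rule_format, of 80] e_80 by simp
  have e_21: "b 21 = b 7" using inv[rule_format, of 7] by simp
  have e_63: "b 63 = b 7" using inv[rule_format, of 21] e_21 by simp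
  have e_46: "b 46 = b 7" using inv[rule_format, of 63] e_63 by simp
  have e_138: "b 138 = b 7" using inv[rule_format, of 46] e_46 by simp
  have e_128: "b 128 = b 7" using inv[rule_format, of 138] e_138 by simp
  have e_98: "b 98 = b 7" using inv[rule_format, of 128] e_128 by simp
  have e_8: "b 8 = b 7" using inv[rule_format, of 98] e_98 by simp
  have e_24: "b 24 = b 7" using inv[rule_format, of 8] e_8 by simp
  have e_72: "b 72 = b 7" using inv[rule_format, of 24] e_24 by simp
  have e_73: "b 73 = b 7" using inv[rule_format, of 72] e_72 by simp
  have e_76: "b 76 = b 7" using inv[rule_format, of 73] e_73 by simp
  have e_85: "b 85 = b 7" using inv[rule_format, of 76] e_76 by simp
  have e_112: "b 112 = b 7" using inv[rule_format, of 85] e_85 by simp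
  have e_50: "b 50 = b 7" using inv[rule_format, of 112] e_112 by simp
  have e_30: "b 30 = b 10" using inv[rule_format, of 10] by simp
  have e_90: "b 90 = b 10" using inv[rule_format, of 30] e_30 by simp
  have e_127: "b 127 = b 10" using inv[rule_format, of 90] e_90 by simp
  have e_95: "b 95 = b 10" using inv[rule_format, of 127] e_127 by simp
  have e_142: "b 142 = b 10" using inv[rule_format, of 95] e_95 by simp
  have e_140: "b 140 = b 10" using inv[rule_format, of 142] e_142 by simp
  have e_134: "b 134 = b 10" using inv[rule_format, of 140] e_140 by simp
  have e_116: "b 116 = b 10" using inv[rule_format, of 134] e_134 by simp
  have e_62: "b 62 = b 10" using inv[rule_format, of 116] e_116 by simp
  have e_43: "b 43 = b 10" using inv[rule_format, of 62] e_62 by simp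
  have e_129: "b 129 = b 10" using inv[rule_format, of 43] e_43 by simp
  have e_101: "b 101 = b 10" using inv[rule_format, of 129] e_129 by simp
  have e_17: "b 17 = b 10" using inv[rule_format, of 101] e_101 by simp
  have e_51: "b 51 = b 10" using inv[rule_format, of 17] e_17 by simp
  have e_33: "b 33 = b 11" using inv[rule_format, of 11] by simp
  have e_99: "b 99 = b 11" using inv[rule_format, of 33] e_33 by simp
  have e_39: "b 39 = b 13" using inv[rule_format, of 13] by simp
  have e_117: "b 117 = b 13" using inv[rule_format, of 39] e_39 by simp
  have e_65: "b 65 = b 13" using inv[rule_format, of 117] e_117 by simp
  have e_52: "b 52 = b 13" using inv[rule_format, of 65] e_65 by simp
  have e_60: "b 60 = b 20" using inv[rule_format, of 20] by simp
  have e_37: "b 37 = b 20" using inv[rule_format, of 60] e_60 by simp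
  have e_111: "b 111 = b 20" using inv[rule_format, of 37] e_37 by simp
  have e_47: "b 47 = b 20" using inv[rule_format, of 111] e_111 by simp
  have e_141: "b 141 = b 20" using inv[rule_format, of 47] e_47 by simp
  have e_137: "b 137 = b 20" using inv[rule_format, of 141] e_141 by simp
  have e_125: "b 125 = b 20" using inv[rule_format, of 137] e_137 by simp
  have e_89: "b 89 = b 20" using inv[rule_format, of 125] e_125 by simp
  have e_124: "b 124 = b 20" using inv[rule_format, of 89] e_89 by simp
  have e_86: "b 86 = b 20" using inv[rule_format, of 124] e_124 by simp
  have e_115: "b 115 = b 20" using inv[rule_format, of 86] e_86 by simp
  have e_59: "b 59 = b 20" using inv[rule_format, of 115] e_115 by simp
  have e_34: "b 34 = b 20" using inv[rule_format, of 59] e_59 by simp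
  have e_102: "b 102 = b 20" using inv[rule_format, of 34] e_34 by simp
  have e_66: "b 66 = b 22" using inv[rule_format, of 22] by simp
  have e_55: "b 55 = b 22" using inv[rule_format, of 66] e_66 by simp
  have e_78: "b 78 = b 26" using inv[rule_format, of 26] by simp
  have e_91: "b 91 = b 26" using inv[rule_format, of 78] e_78 by simp
  have e_130: "b 130 = b 26" using inv[rule_format, of 91] e_91 by simp
  have e_104: "b 104 = b 26" using inv[rule_format, of 130] e_130 by simp
  have e_87: "b 87 = b 29" using inv[rule_format, of 29] by simp
  have e_118: "b 118 = b 29" using inv[rule_format, of 87] e_87 by simp
  have e_68: "b 68 = b 29" using inv[rule_format, of 118] e_118 by simp
  have e_61: "b 61 = b 29" using inv[rule_format, of 68] e_68 by simp
  have e_40: "b 40 = b 29" using inv[rule_format, of 61] e_61 by simp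
  have e_120: "b 120 = b 29" using inv[rule_format, of 40] e_40 by simp
  have e_74: "b 74 = b 29" using inv[rule_format, of 120] e_120 by simp
  have e_79: "b 79 = b 29" using inv[rule_format, of 74] e_74 by simp
  have e_94: "b 94 = b 29" using inv[rule_format, of 79] e_79 by simp
  have e_139: "b 139 = b 29" using inv[rule_format, of 94] e_94 by simp
  have e_131: "b 131 = b 29" using inv[rule_format, of 139] e_139 by simp
  have e_107: "b 107 = b 29" using inv[rule_format, of 131] e_131 by simp
  have e_35: "b 35 = b 29" using inv[rule_format, of 107] e_107 by simp
  have e_105: "b 105 = b 29" using inv[rule_format, of 35] e_35 by simp
  have e_132: "b 132 = b 44" using inv[rule_format, of 44] by simp
  have e_110: "b 110 = b 44" using inv[rule_format, of 132] e_132 by simp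
  have e_88: "b 88 = b 77" using inv[rule_format, of 77] by simp
  have e_121: "b 121 = b 77" using inv[rule_format, of 88] e_88 by simp
  note eqs = e_3 e_6 e_8 e_9 e_12 e_14 e_15 e_16 e_17 e_18 e_19 e_21 e_23 e_24 e_25 e_27 e_28 e_30 e_31 e_32 e_33 e_34 e_35 e_36 e_37 e_38 e_39 e_40 e_41 e_42 e_43 e_45 e_46 e_47 e_48 e_49 e_50 e_51 e_52 e_53 e_54 e_55 e_56 e_57 e_58 e_59 e_60 e_61 e_62 e_63 e_64 e_65 e_66 e_67 e_68 e_69 e_70 e_71 e_72 e_73 e_74 e_75 e_76 e_78 e_79 e_80 e_81 e_82 e_83 e_84 e_85 e_86 e_87 e_88 e_89 e_90 e_91 e_92 e_93 e_94 e_95 e_96 e_97 e_98 e_99 e_100 e_101 e_102 e_103 e_104 e_105 e_106 e_107 e_108 e_109 e_110 e_111 e_112 e_113 e_114 e_115 e_116 e_117 e_118 e_119 e_120 e_121 e_122 e_123 e_124 e_125 e_126 e_127 e_128 e_129 e_130 e_131 e_132 e_133 e_134 e_135 e_136 e_137 e_138 e_139 e_140 e_141 e_142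
  have v_0: "b 0 \<in> {-1,0,1}" using vals[rule_format, of 0] by simp
  have p_0: "0 \<le> b 0 * b 0" "b 0 * b 0 \<le> 1" using v_0 by auto
  have v_1: "b 1 \<in> {-1,0,1}" using vals[rule_format, of 1] by simp
  have p_1: "0 \<le> b 1 * b 1" "b 1 * b 1 \<le> 1" using v_1 by auto
  have v_2: "b 2 \<in> {-1,0,1}" using vals[rule_format, of 2] by simp
  have p_2: "0 \<le> b 2 * b 2" "b 2 * b 2 \<le> 1" using v_2 by auto
  have v_4: "b 4 \<in> {-1,0,1}" using vals[rule_format, of 4] by simp
  have p_4: "0 \<le> b 4 * b 4" "b 4 * b 4 \<le> 1" using v_4 by auto
  have v_5: "b 5 \<in> {-1,0,1}" using vals[rule_format, of 5] by simp
  have p_5: "0 \<le> b 5 * b 5" "b 5 * b 5 \<le> 1" using v_5 by auto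
  have v_7: "b 7 \<in> {-1,0,1}" using vals[rule_format, of 7] by simp
  have p_7: "0 \<le> b 7 * b 7" "b 7 * b 7 \<le> 1" using v_7 by auto
  have v_10: "b 10 \<in> {-1,0,1}" using vals[rule_format, of 10] by simp
  have p_10: "0 \<le> b 10 * b 10" "b 10 * b 10 \<le> 1" using v_10 by auto
  have v_11: "b 11 \<in> {-1,0,1}" using vals[rule_format, of 11] by simp
  have p_11: "0 \<le> b 11 * b 11" "b 11 * b 11 \<le> 1" using v_11 by auto
  have v_13: "b 13 \<in> {-1,0,1}" using vals[rule_format, of 13] by simp
  have p_13: "0 \<le> b 13 * b 13" "b 13 * b 13 \<le> 1" using v_13 by auto
  have v_20: "b 20 \<in> {-1,0,1}" using vals[rule_format, of 20] by simp
  have p_20: "0 \<le> b 20 * b 20" "b 20 * b 20 \<le> 1" using v_20 by auto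
  have v_22: "b 22 \<in> {-1,0,1}" using vals[rule_format, of 22] by simp
  have p_22: "0 \<le> b 22 * b 22" "b 22 * b 22 \<le> 1" using v_22 by auto
  have v_26: "b 26 \<in> {-1,0,1}" using vals[rule_format, of 26] by simp
  have p_26: "0 \<le> b 26 * b 26" "b 26 * b 26 \<le> 1" using v_26 by auto
  have v_29: "b 29 \<in> {-1,0,1}" using vals[rule_format, of 29] by simp
  have p_29: "0 \<le> b 29 * b 29" "b 29 * b 29 \<le> 1" using v_29 by auto
  have v_44: "b 44 \<in> {-1,0,1}" using vals[rule_format, of 44] by simp
  have p_44: "0 \<le> b 44 * b 44" "b 44 * b 44 \<le> 1" using v_44 by auto
  have v_77: "b 77 \<in> {-1,0,1}" using vals[rule_format, of 77] by simp
  have p_77: "0 \<le> b 77 * b 77" "b 77 * b 77 \<le> 1" using v_77 by auto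
  have wt: "1 * (b 0 * b 0) + 15 * (b 1 * b 1) + 15 * (b 2 * b 2) + 15 * (b 4 * b 4) + 15 * (b 5 * b 5) + 15 * (b 7 * b 7) + 15 * (b 10 * b 10) + 3 * (b 11 * b 11) + 5 * (b 13 * b 13) + 15 * (b 20 * b 20) + 3 * (b 22 * b 22) + 5 * (b 26 * b 26) + 15 * (b 29 * b 29) + 3 * (b 44 * b 44) + 3 * (b 77 * b 77) = 36" using w by (simp add: lessThan_nat_numeral eqs numeral_2_eq_2[symmetric]; linarith)
  define S where "S = (\<lambda>y. \<Sum>x<11. b (x * 13 + y))"
  have hS: "(\<Sum>y<13. (S y)^2) = 36" using e13 by (simp add: S_def)
  have hS2: "(S 0)^2 + (S 1)^2 + (S 2)^2 + (S 3)^2 + (S 4)^2 + (S 5)^2 + (S 6)^2 + (S 7)^2 + (S 8)^2 + (S 9)^2 + (S 10)^2 + (S 11)^2 + (S 12)^2 = 36" using hS by (simp add: lessThan_nat_numeral; linarith)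
  have s_0: "S 0 = b 0 + 5 * b 26 + 5 * b 13" unfolding S_def by (simp add: lessThan_nat_numeral eqs numeral_2_eq_2[symmetric]; linarith)
  have s_1: "S 1 = b 22 + 5 * b 1 + 5 * b 29" unfolding S_def by (simp add: lessThan_nat_numeral eqs numeral_2_eq_2[symmetric]; linarith)
  have s_2: "S 2 = b 44 + 5 * b 5 + 5 * b 2" unfolding S_def by (simp add: lessThan_nat_numeral eqs numeral_2_eq_2[symmetric]; linarith)
  have s_3: "S 3 = b 22 + 5 * b 1 + 5 * b 29" unfolding S_def by (simp add: lessThan_nat_numeral eqs numeral_2_eq_2[symmetric]; linarith)
  have s_4: "S 4 = b 77 + 5 * b 4 + 5 * b 10" unfolding S_def by (simp add: lessThan_nat_numeral eqs numeral_2_eq_2[symmetric]; linarith)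
  have s_5: "S 5 = b 44 + 5 * b 5 + 5 * b 2" unfolding S_def by (simp add: lessThan_nat_numeral eqs numeral_2_eq_2[symmetric]; linarith)
  have s_6: "S 6 = b 44 + 5 * b 5 + 5 * b 2" unfolding S_def by (simp add: lessThan_nat_numeral eqs numeral_2_eq_2[symmetric]; linarith)
  have s_7: "S 7 = b 11 + 5 * b 20 + 5 * b 7" unfolding S_def by (simp add: lessThan_nat_numeral eqs numeral_2_eq_2[symmetric]; linarith)
  have s_8: "S 8 = b 11 + 5 * b 20 + 5 * b 7" unfolding S_def by (simp add: lessThan_nat_numeral eqs numeral_2_eq_2[symmetric]; linarith)
  have s_9: "S 9 = b 22 + 5 * b 1 + 5 * b 29" unfolding S_def by (simp add: lessThan_nat_numeral eqs numeral_2_eq_2[symmetric]; linarith)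
  have s_10: "S 10 = b 77 + 5 * b 4 + 5 * b 10" unfolding S_def by (simp add: lessThan_nat_numeral eqs numeral_2_eq_2[symmetric]; linarith)
  have s_11: "S 11 = b 11 + 5 * b 20 + 5 * b 7" unfolding S_def by (simp add: lessThan_nat_numeral eqs numeral_2_eq_2[symmetric]; linarith)
  have s_12: "S 12 = b 77 + 5 * b 4 + 5 * b 10" unfolding S_def by (simp add: lessThan_nat_numeral eqs numeral_2_eq_2[symmetric]; linarith)
  have E13: "(b 0 + 5 * b 26 + 5 * b 13)^2 + 3 * (b 22 + 5 * b 1 + 5 * b 29)^2 + 3 * (b 44 + 5 * b 5 + 5 * b 2)^2 + 3 * (b 77 + 5 * b 4 + 5 * b 10)^2 + 3 * (b 11 + 5 * b 20 + 5 * b 7)^2 = 36" using hS2 unfolding s_0 s_1 s_2 s_3 s_4 s_5 s_6 s_7 s_8 s_9 s_10 s_11 s_12 by linarith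
  have n0: "0 \<le> (b 0 + 5 * b 26 + 5 * b 13)^2" by simp
  have nq_0: "0 \<le> (b 22 + 5 * b 1 + 5 * b 29)^2" by simp
  have nq_1: "0 \<le> (b 44 + 5 * b 5 + 5 * b 2)^2" by simp
  have nq_2: "0 \<le> (b 77 + 5 * b 4 + 5 * b 10)^2" by simp
  have nq_3: "0 \<le> (b 11 + 5 * b 20 + 5 * b 7)^2" by simp
  have q_0: "(b 22 + 5 * b 1 + 5 * b 29)^2 \<le> 12" using E13 n0 nq_0 nq_1 nq_2 nq_3 by linarith
  have sig_0: "b 1 + b 29 = 0" using La[OF v_22 v_1 v_29 q_0] .
  have q_1: "(b 44 + 5 * b 5 + 5 * b 2)^2 \<le> 12" using E13 n0 nq_0 nq_1 nq_2 nq_3 by linarith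
  have sig_1: "b 5 + b 2 = 0" using La[OF v_44 v_5 v_2 q_1] .
  have q_2: "(b 77 + 5 * b 4 + 5 * b 10)^2 \<le> 12" using E13 n0 nq_0 nq_1 nq_2 nq_3 by linarith
  have sig_2: "b 4 + b 10 = 0" using La[OF v_77 v_4 v_10 q_2] .
  have q_3: "(b 11 + 5 * b 20 + 5 * b 7)^2 \<le> 12" using E13 n0 nq_0 nq_1 nq_2 nq_3 by linarith
  have sig_3: "b 20 + b 7 = 0" using La[OF v_11 v_20 v_7 q_3] .
  define U where "U = (\<lambda>y. \<Sum>x<13. b (x * 11 + y))"
  have hU: "(\<Sum>y<11. (U y)^2) = 36" using e11 by (simp add: U_def)
  have hU2: "(U 0)^2 + (U 1)^2 + (U 2)^2 + (U 3)^2 + (U 4)^2 + (U 5)^2 + (U 6)^2 + (U 7)^2 + (U 8)^2 + (U 9)^2 + (U 10)^2 = 36" using hU by (simp add: lessThan_nat_numeral; linarith)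
  have u_0: "U 0 = b 0 + 3 * b 22 + 3 * b 44 + 3 * b 77 + 3 * b 11" unfolding U_def by (simp add: lessThan_nat_numeral eqs numeral_2_eq_2[symmetric]; linarith)
  have u_1: "U 1 = b 26 + 3 * (b 1 + b 5 + b 4 + b 20)" unfolding U_def by (simp add: lessThan_nat_numeral eqs numeral_2_eq_2[symmetric]; linarith)
  have u_2: "U 2 = b 13 + 3 * (b 29 + b 2 + b 10 + b 7)" unfolding U_def by (simp add: lessThan_nat_numeral eqs numeral_2_eq_2[symmetric]; linarith)
  have u_3: "U 3 = b 26 + 3 * (b 1 + b 5 + b 4 + b 20)" unfolding U_def by (simp add: lessThan_nat_numeral eqs numeral_2_eq_2[symmetric]; linarith)
  have u_4: "U 4 = b 26 + 3 * (b 1 + b 5 + b 4 + b 20)" unfolding U_def by (simp add: lessThan_nat_numeral eqs numeral_2_eq_2[symmetric]; linarith)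
  have u_5: "U 5 = b 26 + 3 * (b 1 + b 5 + b 4 + b 20)" unfolding U_def by (simp add: lessThan_nat_numeral eqs numeral_2_eq_2[symmetric]; linarith)
  have u_6: "U 6 = b 13 + 3 * (b 29 + b 2 + b 10 + b 7)" unfolding U_def by (simp add: lessThan_nat_numeral eqs numeral_2_eq_2[symmetric]; linarith)
  have u_7: "U 7 = b 13 + 3 * (b 29 + b 2 + b 10 + b 7)" unfolding U_def by (simp add: lessThan_nat_numeral eqs numeral_2_eq_2[symmetric]; linarith)
  have u_8: "U 8 = b 13 + 3 * (b 29 + b 2 + b 10 + b 7)" unfolding U_def by (simp add: lessThan_nat_numeral eqs numeral_2_eq_2[symmetric]; linarith)
  have u_9: "U 9 = b 26 + 3 * (b 1 + b 5 + b 4 + b 20)" unfolding U_def by (simp add: lessThan_nat_numeral eqs numeral_2_eq_2[symmetric]; linarith)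
  have u_10: "U 10 = b 13 + 3 * (b 29 + b 2 + b 10 + b 7)" unfolding U_def by (simp add: lessThan_nat_numeral eqs numeral_2_eq_2[symmetric]; linarith)
  have E11: "(b 0 + 3 * b 22 + 3 * b 44 + 3 * b 77 + 3 * b 11)^2 + 5 * (b 26 + 3 * (b 1 + b 5 + b 4 + b 20))^2 + 5 * (b 13 + 3 * (b 29 + b 2 + b 10 + b 7))^2 = 36" using hU2 unfolding u_0 u_1 u_2 u_3 u_4 u_5 u_6 u_7 u_8 u_9 u_10 by linarith
  have m0: "0 \<le> (b 0 + 3 * b 22 + 3 * b 44 + 3 * b 77 + 3 * b 11)^2" by simp
  have E11b: "5 * (b 26 + 3 * (b 1 + b 5 + b 4 + b 20))^2 + 5 * (b 13 + 3 * (b 29 + b 2 + b 10 + b 7))^2 \<le> 36" using E11 m0 by linarith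
  have tt: "(b 1 + b 5 + b 4 + b 20) + (b 29 + b 2 + b 10 + b 7) = 0" using sig_0 sig_1 sig_2 sig_3 by linarith
  have tau: "(b 1 + b 5 + b 4 + b 20) = 0" using Lb[OF v_26 v_13 tt E11b] .
  have sq: "b 1 * b 1 + b 5 * b 5 + b 4 * b 4 + b 20 * b 20 \<in> {0,2,4}"
    using Lc[OF v_1 v_5 v_4 v_20] tau by simp
  have sq_0: "b 29 * b 29 = b 1 * b 1" using sig_0 by (simp add: eq_neg_iff_add_eq_0[symmetric])
  have sq_1: "b 2 * b 2 = b 5 * b 5" using sig_1 by (simp add: eq_neg_iff_add_eq_0[symmetric])
  have sq_2: "b 10 * b 10 = b 4 * b 4" using sig_2 by (simp add: eq_neg_iff_add_eq_0[symmetric])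
  have sq_3: "b 7 * b 7 = b 20 * b 20" using sig_3 by (simp add: eq_neg_iff_add_eq_0[symmetric])
  show False using wt sq sq_0 sq_1 sq_2 sq_3 p_0 p_1 p_2 p_4 p_5 p_7 p_10 p_11 p_13 p_20 p_22 p_26 p_29 p_44 p_77 by auto
qed

lemma red_pf: "0 < n \<Longrightarrow> red n R = pf n (coeff (red n R))"
  by (rule poly_eqI) (auto simp: coeff_pf coeff_red_high)

lemma sum_sq_one:
  fixes u :: "nat \<Rightarrow> int"
  assumes "(\<Sum>j<n. u j * u j) = 1"
  shows "\<exists>g<n. (u g = 1 \<or> u g = -1) \<and> (\<forall>j<n. j \<noteq> g \<longrightarrow> u j = 0)"
proof -
  have "\<exists>g<n. u g \<noteq> 0"
  proof (rule ccontr)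
    assume "\<not> ?thesis"
    then have "(\<Sum>j<n. u j * u j) = 0" by (intro sum.neutral) auto
    then show False using assms by simp
  qed
  then obtain g where g: "g < n" "u g \<noteq> 0" by blast
  have split: "(\<Sum>j<n. u j * u j) = u g * u g + (\<Sum>j\<in>{..<n} - {g}. u j * u j)"
    using g by (simp add: sum.remove)
  have nn: "0 \<le> (\<Sum>j\<in>{..<n} - {g}. u j * u j)" by (intro sum_nonneg) simp
  have "0 < u g * u g" using g(2) by (auto simp: zero_less_mult_iff linorder_neq_iff)
  then have "1 \<le> u g * u g" by linarith
  then have ug: "u g * u g = 1" and rest: "(\<Sum>j\<in>{..<n} - {g}. u j * u j) = 0"
    using split nn assms by linarith+
  have "u g = 1 \<or> u g = -1" using ug by (metis square_eq_1_iff power2_eq_square)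
  moreover have "\<forall>j<n. j \<noteq> g \<longrightarrow> u j = 0"
  proof (intro allI impI)
    fix j assume "j < n" "j \<noteq> g"
    then have "u j * u j = 0" using rest sum_nonneg_eq_0_iff[of "{..<n} - {g}" "\<lambda>j. u j * u j"] by auto
    then show "u j = 0" by simp
  qed
  ultimately show ?thesis using g by blast
qed

lemma pf_single: "g < n \<Longrightarrow> (\<forall>j<n. j \<noteq> g \<longrightarrow> u j = 0) \<Longrightarrow> pf n u = monom (u g) g"
  unfolding pf_def by (subst sum.remove[of _ g]) (auto intro!: sum.neutral)

lemma shift_pf:
  assumes n: "0 < n" and h: "h < n"
  shows "cg n 0 (xp h * pf n a) (pf n (\<lambda>i. a ((i + (n - h)) mod n)))"
proof -
  have k1: "((k + h) mod n + (n - h)) mod n = k" if "k < n" for k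
  proof -
    have "((k + h) mod n + (n - h)) mod n = (k + h + (n - h)) mod n" by (simp add: mod_add_left_eq)
    also have "k + h + (n - h) = k + n" using h by simp
    finally show ?thesis using that by simp
  qed
  have k2: "((i + (n - h)) mod n + h) mod n = i" if "i < n" for i
  proof -
    have "((i + (n - h)) mod n + h) mod n = (i + (n - h) + h) mod n" by (simp add: mod_add_left_eq)
    also have "i + (n - h) + h = i + n" using h by simp
    finally show ?thesis using that by simp
  qed
  have "xp h * pf n a = (\<Sum>k<n. monom (a k) (k + h))"
    unfolding pf_def by (simp add: sum_distrib_left mult_monom add.commute)
  also have "cg n 0 \<dots> (\<Sum>k<n. monom (a k) ((k + h) mod n))"
    by (intro cg_sum) (metis cg_Xpow_mod cg_smult smult_monom mult.right_neutral)
  also have "\<dots> = pf n (\<lambda>i. a ((i + (n - h)) mod n))"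
    unfolding pf_def
    by (rule sum.reindex_bij_witness[where i = "\<lambda>i. (i + (n - h)) mod n" and j = "\<lambda>k. (k + h) mod n"])
      (use n in \<open>auto simp: k1 k2\<close>)
  finally show ?thesis .
qed

lemma mult3_pf: "cg 143 0 (pc (pf 143 c) 3) (pf 143 (\<lambda>i. c ((48 * i) mod 143)))"
proof -
  have k1: "(48 * ((k * 3) mod 143)) mod 143 = k" if "k < 143" for k :: nat
  proof -
    have "(48 * ((k * 3) mod 143)) mod 143 = (48 * (k * 3)) mod 143" by (simp add: mod_mult_right_eq)
    also have "48 * (k * 3) = k + 143 * k" by simp
    also have "(k + 143 * k) mod 143 = k" using that by (metis mod_mult_self2 mod_less)
    finally show ?thesis .
  qed
  have k2: "((48 * i) mod 143 * 3) mod 143 = i" if "i < 143" for i :: nat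
  proof -
    have "((48 * i) mod 143 * 3) mod 143 = (48 * i * 3) mod 143" by (simp add: mod_mult_left_eq)
    also have "48 * i * 3 = i + 143 * i" by simp
    also have "(i + 143 * i) mod 143 = i" using that by (metis mod_mult_self2 mod_less)
    finally show ?thesis .
  qed
  have "pc (pf 143 c) 3 = (\<Sum>k<143. monom (c k) (k * 3))"
    unfolding pf_def by (simp add: pc_sum)
  also have "cg 143 0 \<dots> (\<Sum>k<143. monom (c k) ((k * 3) mod 143))"
    by (intro cg_sum) (metis cg_Xpow_mod cg_smult smult_monom mult.right_neutral)
  also have "\<dots> = pf 143 (\<lambda>i. c ((48 * i) mod 143))"
    unfolding pf_def
    by (rule sum.reindex_bij_witness[where i = "\<lambda>i. (48 * i) mod 143" and j = "\<lambda>k. (k * 3) mod 143"])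
      (auto simp: k1 k2)
  finally show ?thesis .
qed

lemma iter3:
  fixes b :: "nat \<Rightarrow> int"
  assumes n: "0 < n" and H: "\<forall>i<n. b i = s * b ((3 * i) mod n)"
  shows "\<forall>i<n. b i = s^k * b ((3^k * i) mod n)"
proof (induction k)
  case 0 then show ?case by simp
next
  case (Suc k)
  show ?case
  proof (intro allI impI)
    fix i assume i: "i < n"
    have "b i = s^k * b ((3^k * i) mod n)" using Suc i by blast
    also have "b ((3^k * i) mod n) = s * b ((3 * ((3^k * i) mod n)) mod n)" by (rule H[rule_format]) (simp add: n)
    also have "(3 * ((3^k * i) mod n)) mod n = (3^Suc k * i) mod n" by (simp add: mod_mult_right_eq mult.assoc)
    finally show "b i = s^Suc k * b ((3^Suc k * i) mod n)" by simp
  qed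
qed

lemma smult_sum_right: "smult c (sum f A) = sum (\<lambda>i. smult c (f i)) A"
  by (induction A rule: infinite_finite_induct) (auto simp: smult_add_right)

theorem proposition5:
  shows "\<not> (\<exists>W. is_CW 143 36 W)"
proof
  assume "\<exists>W. is_CW 143 36 W"
  then obtain W where W: "is_CW 143 36 W" by blast
  define a where "a = (\<lambda>j. W 0 j)"
  define A where "A = pf 143 a"
  have H36: "cg 143 0 (A * star 143 A) [:36:]"
    using W_to_A[OF W] by (simp add: A_def a_def)
  have H4: "cg 143 4 (A * star 143 A) 0"
  proof -
    have c: "cg 143 4 [:36:] 0" using cg_smult_mod[of 143 4 "[:9:]"] by simp
    show ?thesis using cg_trans[OF cg_0_any[OF H36] c] by simp
  qed
  have H9: "cg 143 9 (A * star 143 A) 0"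
  proof -
    have c: "cg 143 9 [:36:] 0" using cg_smult_mod[of 143 9 "[:4:]"] by simp
    show ?thesis using cg_trans[OF cg_0_any[OF H36] c] by simp
  qed
  define C where "C = pc A 3 * star 143 A"
  have M2: "cg 143 (int 2 * int 2) C 0"
    unfolding C_def by (rule multiplier[of 2 143 60 3 28 A]) (simp_all add: H4)
  have M3: "cg 143 (int 3 * int 3) C 0"
    unfolding C_def by (rule multiplier[of 3 143 15 3 1 A]) (simp_all add: H9)
  have C36: "cg 143 (4 * 9) C 0"
    by (rule cg_combine[of 143 4 C 9 "-2" 1]) (use M2 M3 in simp_all)
  then obtain R S where RS: "C - 0 = smult 36 R + (xp 143 - 1) * S" unfolding cg_def by auto
  define U where "U = red 143 R"
  have CU: "cg 143 0 C (smult 36 U)"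
  proof -
    have "cg 143 0 C (smult 36 R)" unfolding cg_def using RS
      by (intro exI[of _ 0] exI[of _ S]) simp
    also have "cg 143 0 (smult 36 R) (smult 36 U)" unfolding U_def by (intro cg_smult cg_red)
    finally show ?thesis .
  qed
  define u where "u = coeff U"
  have Uu: "U = pf 143 u" unfolding u_def U_def by (rule red_pf) simp
  have CC: "cg 143 0 (C * star 143 C) [:36 * 36:]"
  proof -
    have "C * star 143 C = pc (A * star 143 A) 3 * (star 143 (star 143 A) * star 143 A)"
      unfolding C_def by (simp add: star_def pc_comm[of A 3] ac_simps)
    also have "cg 143 0 \<dots> (pc [:36:] 3 * (A * star 143 A))"
      by (intro cg_mult cg_pc_outer H36 star_star cg_refl) simp
    also have "cg 143 0 \<dots> (pc [:36:] 3 * [:36:])" by (intro cg_mult cg_refl H36)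
    finally show ?thesis by simp
  qed
  have X: "cg 143 0 (C * star 143 C) (smult 36 U * star 143 (smult 36 U))"
    by (intro cg_mult cg_star CU)
  have X2: "smult 36 U * star 143 (smult 36 U) = smult (36 * 36) (U * star 143 U)" by simp
  have Y: "cg 143 0 (smult (36 * 36) (U * star 143 U)) [:36 * 36:]"
    using cg_trans[OF cg_sym[OF X] CC] unfolding X2 .
  have Y2: "smult (36 * 36) (U * star 143 U - 1) = smult (36 * 36) (U * star 143 U) - [:36 * 36:]"
    by (simp add: smult_diff_right)
  have Z: "cg 143 0 (smult (36 * 36) (U * star 143 U - 1)) 0"
    unfolding Y2 using Y cg_iff0 by blast
  have "cg 143 0 (U * star 143 U - 1) 0" using cg_cancel[OF _ _ Z] by simp
  then have UU: "cg 143 0 (pf 143 u * star 143 (pf 143 u)) [:1:]"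
    using cg_iff0 Uu by (metis one_pCons)
  have "autocorr 143 u 0 = 1" using autocorr_from_cg[OF _ UU] by simp
  then have "(\<Sum>j<143. u j * u j) = 1" unfolding autocorr_def by simp
  then obtain g where g: "g < 143" "u g = 1 \<or> u g = -1" "\<forall>j<143. j \<noteq> g \<longrightarrow> u j = 0"
    using sum_sq_one by blast
  define sg where "sg = u g"
  have Ug: "U = smult sg (xp g)" unfolding Uu sg_def using pf_single[OF g(1) g(3)] by (simp add: smult_monom)
  have PA: "cg 143 0 (pc A 3) (smult sg (xp g * A))"
  proof -
    have "smult 36 (pc A 3) = pc A 3 * [:36:]" by simp
    also have "cg 143 0 \<dots> (pc A 3 * (A * star 143 A))" by (intro cg_mult cg_refl cg_sym[OF H36])
    also have "pc A 3 * (A * star 143 A) = C * A" unfolding C_def by (simp add: ac_simps)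
    also have "cg 143 0 \<dots> (smult 36 U * A)" by (intro cg_mult cg_refl CU)
    also have "smult 36 U * A = smult 36 (smult sg (xp g * A))" unfolding Ug by simp
    finally have Z: "cg 143 0 (smult 36 (pc A 3 - smult sg (xp g * A))) 0"
      using cg_iff0 by (simp add: smult_diff_right)
    have "cg 143 0 (pc A 3 - smult sg (xp g * A)) 0" using cg_cancel[OF _ _ Z] by simp
    then show ?thesis using cg_iff0 by blast
  qed
  define h where "h = ((143 - g) * 72) mod 143"
  have hlt: "h < 143" unfolding h_def by simp
  have hg: "(h * 3 + g) mod 143 = h mod 143"
  proof -
    have "(h * 3 + g) mod 143 = ((143 - g) * 72 * 3 + g) mod 143"
      unfolding h_def by (metis mod_add_left_eq mod_mult_left_eq)
    also have "(143 - g) * 72 * 3 + g = (143 - g) * 72 + 143 * (144 - g)" using g(1) by arith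
    also have "((143 - g) * 72 + 143 * (144 - g)) mod 143 = h" unfolding h_def by simp
    finally show ?thesis using hlt by simp
  qed
  define B where "B = xp h * A"
  have PB: "cg 143 0 (pc B 3) (smult sg B)"
  proof -
    have "pc B 3 = xp (h * 3) * pc A 3" unfolding B_def by simp
    also have "cg 143 0 \<dots> (xp (h * 3) * smult sg (xp g * A))" by (intro cg_mult cg_refl PA)
    also have "xp (h * 3) * smult sg (xp g * A) = smult sg (xp (h * 3 + g) * A)"
      by (simp add: mult_monom mult.assoc[symmetric])
    also have "cg 143 0 \<dots> (smult sg (xp h * A))" by (intro cg_smult cg_mult cg_refl cg_Xpow hg)
    finally show ?thesis unfolding B_def .
  qed
  have BB: "cg 143 0 (B * star 143 B) [:36:]"
  proof -
    have "B * star 143 B = xp (h + h * 142) * (A * star 143 A)"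
      unfolding B_def star_def by (simp add: mult_monom ac_simps)
    also have "cg 143 0 \<dots> (xp 0 * [:36:])" by (intro cg_mult cg_Xpow H36) simp
    finally show ?thesis by (simp add: monom_0)
  qed
  define b where "b = (\<lambda>i. a ((i + (143 - h)) mod 143))"
  have pfb: "cg 143 0 (pf 143 b) B"
    unfolding b_def B_def A_def by (rule cg_sym[OF shift_pf]) (simp_all add: hlt)
  have "cg 143 0 (pf 143 (\<lambda>i. b ((48 * i) mod 143))) (pf 143 (\<lambda>i. sg * b i))"
  proof -
    have "cg 143 0 (pf 143 (\<lambda>i. b ((48 * i) mod 143))) (pc (pf 143 b) 3)" by (rule cg_sym[OF mult3_pf])
    also have "cg 143 0 \<dots> (pc B 3)" by (rule cg_pc_outer[OF pfb])
    also have "cg 143 0 \<dots> (smult sg B)" by (rule PB)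
    also have "cg 143 0 \<dots> (smult sg (pf 143 b))" by (rule cg_smult[OF cg_sym[OF pfb]])
    also have "smult sg (pf 143 b) = pf 143 (\<lambda>i. sg * b i)" unfolding pf_def by (simp add: smult_sum_right smult_monom)
    finally show ?thesis .
  qed
  then have e48: "b ((48 * i) mod 143) = sg * b i" if "i < 143" for i using cextract_eq that by simp
  have inv0: "\<forall>i<143. b i = sg * b ((3 * i) mod 143)"
  proof (intro allI impI)
    fix i :: nat assume i: "i < 143"
    have "b ((48 * ((3 * i) mod 143)) mod 143) = sg * b ((3 * i) mod 143)" by (rule e48) simp
    moreover have "(48 * ((3 * i) mod 143)) mod 143 = i"
    proof -
      have "(48 * ((3 * i) mod 143)) mod 143 = (48 * (3 * i)) mod 143" by (simp add: mod_mult_right_eq)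
      also have "48 * (3 * i) = i + 143 * i" by simp
      also have "(i + 143 * i) mod 143 = i" using i by (metis mod_mult_self2 mod_less)
      finally show ?thesis .
    qed
    ultimately show "b i = sg * b ((3 * i) mod 143)" by simp
  qed
  have bb: "cg 143 0 (pf 143 b * star 143 (pf 143 b)) [:36:]"
  proof -
    have "cg 143 0 (pf 143 b * star 143 (pf 143 b)) (B * star 143 B)" by (intro cg_mult cg_star pfb)
    then show ?thesis using BB by (rule cg_trans)
  qed
  have w: "(\<Sum>i<143. b i * b i) = 36"
    using autocorr_from_cg[OF _ bb, of 0] unfolding autocorr_def by simp
  have e13: "(\<Sum>y<13. (\<Sum>x<11. b (x * 13 + y))^2) = 36" by (rule proj_energy[OF _ _ _ bb]) simp_all
  have e11: "(\<Sum>y<11. (\<Sum>x<13. b (x * 11 + y))^2) = 36" by (rule proj_energy[OF _ _ _ bb]) simp_all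
  have vals: "\<forall>i<143. b i \<in> {-1,0,1}"
  proof (intro allI impI)
    fix i :: nat assume "i < 143"
    have "W 0 ((i + (143 - h)) mod 143) \<in> {0, 1, -1}" by (rule W_entries[OF W]) simp
    then show "b i \<in> {-1,0,1}" unfolding b_def a_def by auto
  qed
  have sg1: "sg = 1"
  proof (rule ccontr)
    assume "sg \<noteq> 1"
    then have sgm: "sg = -1" using g(2) sg_def by auto
    have it: "\<forall>i<143. b i = sg^15 * b ((3^15 * i) mod 143)" by (rule iter3[OF _ inv0]) simp
    then have "b i = 0" if "i < 143" for i
    proof -
      have "b i = sg^15 * b ((3^15 * i) mod 143)" using it that by blast
      moreover have "(3^15 * i) mod 143 = i"
      proof -
        have p: "(3::nat)^15 mod 143 = 1" by simp
        have "(3^15 * i) mod 143 = ((3^15 mod 143) * i) mod 143" by (simp only: mod_mult_left_eq)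
        then show ?thesis unfolding p using that by simp
      qed
      ultimately show ?thesis using sgm by simp
    qed
    then have "(\<Sum>i<143. b i * b i) = 0" by (intro sum.neutral) auto
    then show False using w by simp
  qed
  have inv1: "\<forall>i<143. b i = b ((3*i) mod 143)" using inv0[unfolded sg1 mult_1] .
  show False by (rule final[OF vals inv1 w e13 e11])
qed

end
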